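(* Let $\sigma,\pi$ be permutations both having exactly $k$ descents. Let $t$ be the total number of letters in all tails of adjacencies of $\pi$, i.e. the number of indices $i\ge2$ with $\pi_i=\pi_{i-1}+1$. If $t>|\sigma|$, then $\mu(\sigma,\pi)=0$.
   Context: A permutation of length $n$ is an arrangement $\pi=\pi_1\cdots\pi_n$ of $1,\dots,n$; $|\pi|$ denotes length. The permutation poset is ordered by pattern containment: $\sigma\le\pi$ if $\pi$ has a subsequence in the same relative order as $\sigma$. A descent is an index $i$ with $\pi_i>\pi_{i+1}$. $\mu$ is the Möbius function of this poset: $\mu(a,a)=1$, $\mu(a,b)=-\sum_{a\le z<b}\mu(a,z)$ for $a<b$, $\mu(a,b)=0$ if $a\not\le b$. An adjacency is a maximal run of consecutive positions carrying consecutive increasing values; its tail is all but its first letter. *)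

theory Defs
  imports Main
begin

definition is_perm :: "nat list \<Rightarrow> bool" where
  "is_perm p \<longleftrightarrow> distinct p \<and> set p = {1..length p}"

definition order_iso :: "nat list \<Rightarrow> nat list \<Rightarrow> bool" where
  "order_iso a b \<longleftrightarrow> length a = length b \<and>
     (\<forall>i < length a. \<forall>j < length a. (a ! i < a ! j) \<longleftrightarrow> (b ! i < b ! j))"

definition contains :: "nat list \<Rightarrow> nat list \<Rightarrow> bool" where
  "contains s p \<longleftrightarrow> (\<exists>I \<subseteq> {..<length p}. order_iso s (nths p I))"

lemma order_iso_sym: "order_iso a b \<Longrightarrow> order_iso b a"
  unfolding order_iso_def by auto

lemma strict_contains_length:
  assumes "contains s p" "\<not> contains p s" shows "length s < length p"
proof (rule ccontr)
  assume "\<not> length s < length p"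
  from assms(1) obtain I where I: "I \<subseteq> {..<length p}" "order_iso s (nths p I)"
    unfolding contains_def by blast
  have len: "length s = card {i. i < length p \<and> i \<in> I}"
    using I(2) by (simp add: order_iso_def length_nths)
  have "card {i. i < length p \<and> i \<in> I} \<le> length p"
    by (metis (no_types, lifting) card_mono card_lessThan finite_lessThan lessThan_iff mem_Collect_eq subsetI)
  hence eq: "length s = length p" using len \<open>\<not> length s < length p\<close> by simp
  have "{i. i < length p \<and> i \<in> I} = {..<length p}"
  proof (rule card_subset_eq)
    show "finite {..<length p}" by simp
    show "{i. i < length p \<and> i \<in> I} \<subseteq> {..<length p}" by auto
    show "card {i. i < length p \<and> i \<in> I} = card {..<length p}" using len eq by simp
  qed
  hence "\<forall>i<length p. i \<in> I" by auto
  hence "nths p I = p" by (rule nths_all)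
  hence "order_iso p s" using I(2) order_iso_sym by simp
  moreover have "nths s {..<length s} = s" by (rule nths_all) auto
  ultimately have "contains p s" unfolding contains_def by (metis order_refl)
  thus False using assms(2) by simp
qed

text \<open>Moebius function of the permutation poset. The strict order z < b is
  rendered as (z \<le> b and not b \<le> z), the strict part of the containment order.\<close>
function mobius :: "nat list \<Rightarrow> nat list \<Rightarrow> int" where
  "mobius a b =
     (if a = b then 1
      else if contains a b then
        - (\<Sum>z \<in> {z. is_perm z \<and> contains a z \<and> contains z b \<and> \<not> contains b z}. mobius a z)
      else 0)"
  by auto
termination
  by (relation "measure (\<lambda>(a, b). length b)") (auto intro: strict_contains_length)

definition descents :: "nat list \<Rightarrow> nat" where
  "descents p = card {i. Suc i < length p \<and> p ! i > p ! Suc i}"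

text \<open>Total number of letters in tails of adjacencies: indices i \<ge> 2 (1-based) with
  p_i = p_(i-1) + 1; here 0-based: 1 \<le> i < length p with p!i = p!(i-1) + 1.\<close>
definition adj_tail_count :: "nat list \<Rightarrow> nat" where
  "adj_tail_count p = card {i. 1 \<le> i \<and> i < length p \<and> p ! i = p ! (i - 1) + 1}"

end

theory Submission
  imports Defs
begin

declare mobius.simps[simp del]

definition emb :: "nat list \<Rightarrow> nat list \<Rightarrow> (nat \<Rightarrow> nat) \<Rightarrow> bool" where
  "emb s p f \<longleftrightarrow> (\<forall>i<length s. f i < length p) \<and> (\<forall>i j. i < j \<longrightarrow> j < length s \<longrightarrow> f i < f j)
     \<and> (\<forall>i<length s. \<forall>j<length s. (s!i < s!j) = (p!(f i) < p!(f j)))"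

lemma nths_filter: "nths p I = map ((!) p) (filter (\<lambda>i. i \<in> I) [0..<length p])"
proof -
  have "zip p [0..<length p] = map (\<lambda>i. (p!i, i)) [0..<length p]"
    by (rule nth_equalityI) auto
  thus ?thesis unfolding nths_def by (simp add: filter_map o_def)
qed

lemma filter_image:
  assumes "\<forall>i j. i < j \<longrightarrow> j < m \<longrightarrow> f i < f j" "\<forall>i<m. f i < n"
  shows "filter (\<lambda>i. i \<in> f ` {..<m}) [0..<n] = map f [0..<m]"
proof (rule sorted_distinct_set_unique)
  show "sorted (map f [0..<m])" using assms(1)
    by (auto simp: sorted_iff_nth_mono) (metis le_eq_less_or_eq)
  show "distinct (map f [0..<m])" using assms(1)
    unfolding distinct_conv_nth
  proof (intro allI impI)
    fix i j assume "i < length (map f [0..<m])" "j < length (map f [0..<m])" "i \<noteq> j"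
    thus "map f [0..<m] ! i \<noteq> map f [0..<m] ! j" using assms(1)
      by (cases "i < j") (auto dest: spec[of _ i] spec[of _ j] simp: nat_neq_iff)
  qed
  show "set (filter (\<lambda>i. i \<in> f ` {..<m}) [0..<n]) = set (map f [0..<m])"
    using assms(2) by auto
  show "sorted (filter (\<lambda>i. i \<in> f ` {..<m}) [0..<n])" by (rule sorted_wrt_filter) simp
qed auto

lemma contains_emb: "contains s p \<longleftrightarrow> (\<exists>f. emb s p f)"
proof
  assume "contains s p"
  then obtain I where I: "I \<subseteq> {..<length p}" "order_iso s (nths p I)"
    unfolding contains_def by blast
  define il where "il = filter (\<lambda>i. i \<in> I) [0..<length p]"
  have N: "nths p I = map ((!) p) il" unfolding il_def by (rule nths_filter)
  have sw: "sorted_wrt (<) il" unfolding il_def by (rule sorted_wrt_filter) simp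
  have len: "length s = length il" using I(2) N by (simp add: order_iso_def)
  have "emb s p ((!) il)"
    unfolding emb_def
  proof (intro conjI allI impI)
    fix i assume "i < length s"
    hence "il ! i \<in> set il" using len by simp
    thus "il ! i < length p" unfolding il_def by auto
  next
    fix i j assume "i < j" "j < length s"
    thus "il ! i < il ! j" using sw len by (simp add: sorted_wrt_iff_nth_less)
  next
    fix i j assume "i < length s" "j < length s"
    thus "(s ! i < s ! j) = (p ! (il ! i) < p ! (il ! j))"
      using I(2) N len by (auto simp: order_iso_def)
  qed
  thus "\<exists>f. emb s p f" by blast
next
  assume "\<exists>f. emb s p f"
  then obtain f where f: "emb s p f" by blast
  have "nths p (f ` {..<length s}) = map ((!) p) (map f [0..<length s])"
    unfolding nths_filter using f unfolding emb_def by (subst filter_image) auto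
  hence "order_iso s (nths p (f ` {..<length s}))"
    using f unfolding emb_def order_iso_def by auto
  moreover have "f ` {..<length s} \<subseteq> {..<length p}" using f unfolding emb_def by auto
  ultimately show "contains s p" unfolding contains_def by blast
qed

lemma emb_trans: "emb a b f \<Longrightarrow> emb b c g \<Longrightarrow> emb a c (g \<circ> f)"
  unfolding emb_def by auto

lemma contains_trans: "contains a b \<Longrightarrow> contains b c \<Longrightarrow> contains a c"
  using emb_trans contains_emb by metis

lemma emb_id: "emb a a id"
  unfolding emb_def by auto

lemma contains_refl: "contains a a"
  using emb_id contains_emb by blast

lemma emb_shift: "emb s p f \<Longrightarrow> i \<le> j \<Longrightarrow> j < length s \<Longrightarrow> f i + (j - i) \<le> f j"
proof (induction j)
  case 0 thus ?case by simp
next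
  case (Suc j)
  show ?case
  proof (cases "i = Suc j")
    case False
    hence "f i + (j - i) \<le> f j" using Suc by simp
    moreover have "f j < f (Suc j)" using Suc.prems unfolding emb_def by auto
    ultimately show ?thesis using False Suc.prems by linarith
  qed simp
qed

lemma emb_len: "emb s p f \<Longrightarrow> length s \<le> length p"
proof (cases "length s")
  case (Suc k)
  assume e: "emb s p f"
  have "f 0 + k \<le> f k" using emb_shift[OF e, of 0 k] Suc by simp
  moreover have "f k < length p" using e Suc unfolding emb_def by auto
  ultimately show ?thesis using Suc by simp
qed simp

lemma emb_is_id: "emb s p f \<Longrightarrow> length s = length p \<Longrightarrow> i < length s \<Longrightarrow> f i = i"
proof -
  assume e: "emb s p f" and l: "length s = length p" and i: "i < length s"
  have "f 0 + i \<le> f i" using emb_shift[OF e, of 0 i] i by simp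
  moreover have "f i + (length s - 1 - i) \<le> f (length s - 1)" using emb_shift[OF e, of i "length s - 1"] i by simp
  moreover have "f (length s - 1) < length p" using e i unfolding emb_def by auto
  ultimately show ?thesis using l i by linarith
qed

lemma perm_val: assumes "is_perm a" "i < length a"
  shows "a ! i = card {j. j < length a \<and> a!j \<le> a!i}"
proof -
  have d: "distinct a" and s: "set a = {1..length a}" using assms(1) unfolding is_perm_def by auto
  have "(!) a ` {j. j < length a \<and> a!j \<le> a!i} = {v \<in> set a. v \<le> a!i}"
    by (auto simp: in_set_conv_nth)
  also have "\<dots> = {1..a!i}" using s assms(2) nth_mem[OF assms(2)] by auto
  finally have "card ((!) a ` {j. j < length a \<and> a!j \<le> a!i}) = a!i" by simp
  moreover have "inj_on ((!) a) {j. j < length a \<and> a!j \<le> a!i}"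
    using d by (auto simp: inj_on_def nth_eq_iff_index_eq)
  ultimately show ?thesis by (simp add: card_image)
qed

lemma perm_iso_eq: assumes "is_perm a" "is_perm b" "order_iso a b" shows "a = b"
proof (rule nth_equalityI)
  show l: "length a = length b" using assms(3) unfolding order_iso_def by simp
  fix i assume i: "i < length a"
  have "{j. j < length a \<and> a!j \<le> a!i} = {j. j < length b \<and> b!j \<le> b!i}"
    using assms(3) i l unfolding order_iso_def by (auto simp: not_less[symmetric])
  thus "a ! i = b ! i" using perm_val[OF assms(1) i] perm_val[OF assms(2)] i l by simp
qed

lemma contains_antisym: assumes "is_perm a" "is_perm b" "contains a b" "contains b a" shows "a = b"
proof -
  obtain f where f: "emb a b f" using assms(3) contains_emb by blast
  obtain g where g: "emb b a g" using assms(4) contains_emb by blast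
  have l: "length a = length b" using emb_len[OF f] emb_len[OF g] by simp
  have "order_iso a b" using f emb_is_id[OF f l] l unfolding emb_def order_iso_def by auto
  thus ?thesis using perm_iso_eq assms by blast
qed

definition std :: "nat list \<Rightarrow> nat list" where
  "std L = map (\<lambda>v. card {w \<in> set L. w \<le> v}) L"

lemma std_props: assumes "distinct L"
  shows "is_perm (std L)" "order_iso (std L) L" "length (std L) = length L"
proof -
  define rk where "rk v = card {w \<in> set L. w \<le> v}" for v
  have mono: "rk v < rk w" if "v \<in> set L" "w \<in> set L" "v < w" for v w
  proof -
    have "{x \<in> set L. x \<le> v} \<subset> {x \<in> set L. x \<le> w}" using that by force
    thus ?thesis unfolding rk_def by (simp add: psubset_card_mono)
  qed
  have iff: "rk v < rk w \<longleftrightarrow> v < w" if "v \<in> set L" "w \<in> set L" for v w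
    using mono[OF that] mono[OF that(2,1)] by (metis less_asym linorder_neqE_nat)
  show l: "length (std L) = length L" unfolding std_def by simp
  show "order_iso (std L) L" unfolding order_iso_def std_def rk_def[symmetric]
    using iff by auto
  have inj: "inj_on rk (set L)" using mono by (metis inj_onI less_irrefl linorder_neqE_nat)
  have dist: "distinct (std L)" unfolding std_def rk_def[symmetric]
    using assms inj by (simp add: distinct_map)
  have sub: "set (std L) \<subseteq> {1..length L}"
  proof
    fix y assume "y \<in> set (std L)"
    then obtain v where v: "v \<in> set L" "y = rk v" unfolding std_def rk_def by auto
    have "v \<in> {w \<in> set L. w \<le> v}" using v(1) by simp
    hence "{w \<in> set L. w \<le> v} \<noteq> {}" by blast
    hence "card {w \<in> set L. w \<le> v} > 0" by (simp add: card_gt_0_iff)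
    hence "rk v \<ge> 1" unfolding rk_def by simp
    moreover have "rk v \<le> card (set L)" unfolding rk_def by (rule card_mono) auto
    ultimately show "y \<in> {1..length L}" using v assms by (simp add: distinct_card)
  qed
  have "card (set (std L)) = length L" using dist l by (simp add: distinct_card)
  hence "set (std L) = {1..length L}" using sub by (simp add: card_subset_eq)
  thus "is_perm (std L)" using dist l unfolding is_perm_def by simp
qed

definition dc :: "nat list \<Rightarrow> nat \<Rightarrow> nat" where
  "dc p q = card {d. d < q \<and> Suc d < length p \<and> p!Suc d < p!d}"

lemma descents_dc: "descents p = dc p (length p)"
  unfolding descents_def dc_def by (rule arg_cong[where f=card]) auto

lemma dc_fin: "finite {d. d < q \<and> Suc d < length p \<and> p!Suc d < p!d}"
  by (rule finite_subset[of _ "{..<q}"]) auto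

lemma dc_mono: "q \<le> q' \<Longrightarrow> dc p q \<le> dc p q'"
  unfolding dc_def by (rule card_mono[OF dc_fin]) auto

lemma dc_strict: "q \<le> d \<Longrightarrow> d < q' \<Longrightarrow> Suc d < length p \<Longrightarrow> p!Suc d < p!d \<Longrightarrow> dc p q < dc p q'"
proof -
  assume a: "q \<le> d" "d < q'" "Suc d < length p" "p!Suc d < p!d"
  have "{d. d < q \<and> Suc d < length p \<and> p!Suc d < p!d} \<subseteq> {d. d < q' \<and> Suc d < length p \<and> p!Suc d < p!d}"
    using a by auto
  moreover have "d \<in> {d. d < q' \<and> Suc d < length p \<and> p!Suc d < p!d}" using a by simp
  moreover have "d \<notin> {d. d < q \<and> Suc d < length p \<and> p!Suc d < p!d}" using a by simp
  ultimately have "{d. d < q \<and> Suc d < length p \<and> p!Suc d < p!d} \<subset> {d. d < q' \<and> Suc d < length p \<and> p!Suc d < p!d}"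
    by blast
  thus ?thesis unfolding dc_def by (rule psubset_card_mono[OF dc_fin])
qed

lemma dc_le_des: "dc p q \<le> descents p"
proof -
  have "dc p q \<le> dc p (max q (length p))" by (rule dc_mono) simp
  also have "\<dots> = dc p (length p)" unfolding dc_def by (rule arg_cong[where f=card]) auto
  finally show ?thesis by (simp add: descents_dc)
qed

lemma dc_0: "dc p 0 = 0"
  unfolding dc_def by simp

lemma dc_Suc: "dc p (Suc q) = dc p q + (if Suc q < length p \<and> p!Suc q < p!q then 1 else 0)"
proof -
  have "{d. d < Suc q \<and> Suc d < length p \<and> p!Suc d < p!d} =
     {d. d < q \<and> Suc d < length p \<and> p!Suc d < p!d} \<union> (if Suc q < length p \<and> p!Suc q < p!q then {q} else {})"
    by (auto simp: less_Suc_eq)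
  thus ?thesis unfolding dc_def by (auto simp: card_insert_if dc_fin)
qed

lemma exists_desc: "i < j \<Longrightarrow> j < length (p::nat list) \<Longrightarrow> p!j < p!i \<Longrightarrow> \<exists>d. i \<le> d \<and> d < j \<and> p!Suc d < p!d"
proof (induction j)
  case 0 thus ?case by simp
next
  case (Suc j)
  show ?case
  proof (cases "p!Suc j < p!j")
    case True thus ?thesis using Suc.prems by (intro exI[of _ j]) auto
  next
    case False
    hence "p!j < p!i" using Suc.prems by simp
    moreover have "i \<noteq> j" using False Suc.prems by auto
    ultimately obtain d where "i \<le> d \<and> d < j \<and> p!Suc d < p!d" using Suc by fastforce
    thus ?thesis by auto
  qed
qed

lemma emb_dc: "emb x p f \<Longrightarrow> a \<le> b \<Longrightarrow> b < length x \<Longrightarrow> dc x b + dc p (f a) \<le> dc x a + dc p (f b)"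
proof (induction b)
  case 0 thus ?case by simp
next
  case (Suc b)
  show ?case
  proof (cases "a = Suc b")
    case False
    hence IH: "dc x b + dc p (f a) \<le> dc x a + dc p (f b)" using Suc by simp
    have fb: "f b < f (Suc b)" "f (Suc b) < length p" using Suc.prems unfolding emb_def by auto
    show ?thesis
    proof (cases "x!Suc b < x!b")
      case True
      hence "p!(f (Suc b)) < p!(f b)" using Suc.prems unfolding emb_def by auto
      then obtain d where d: "f b \<le> d" "d < f (Suc b)" "p!Suc d < p!d"
        using exists_desc[OF fb] by blast
      have "dc p (f b) < dc p (f (Suc b))" by (rule dc_strict[OF d(1,2) _ d(3)]) (use d fb in auto)
      thus ?thesis using IH dc_Suc[of x b] by auto
    next
      case False
      have "dc p (f b) \<le> dc p (f (Suc b))" using fb by (simp add: dc_mono)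
      thus ?thesis using IH dc_Suc[of x b] False by auto
    qed
  qed simp
qed

lemma dc_last: "length x = Suc m \<Longrightarrow> dc x m = descents x"
  unfolding descents_def dc_def by (rule arg_cong[where f=card]) auto

lemma des_mono: assumes "emb x p f" shows "descents x \<le> descents p"
proof (cases "length x")
  case 0 thus ?thesis unfolding descents_def by simp
next
  case (Suc m)
  have "dc x m + dc p (f 0) \<le> dc x 0 + dc p (f m)" using emb_dc[OF assms, of 0 m] Suc by simp
  thus ?thesis using dc_last[OF Suc] dc_0[of x] dc_le_des[of p "f m"] by simp
qed

lemma contains_des: "contains x p \<Longrightarrow> descents x \<le> descents p"
  using des_mono contains_emb by blast

lemma runA: assumes "emb x p f" "descents x = descents p" "a < length x"
  shows "dc p (f a) = dc x a"
proof -
  obtain m where m: "length x = Suc m" using assms(3) by (cases "length x") auto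
  have "dc x a + dc p (f 0) \<le> dc x 0 + dc p (f a)" using emb_dc[OF assms(1), of 0 a] assms(3) by simp
  moreover have "dc x m + dc p (f a) \<le> dc x a + dc p (f m)" using emb_dc[OF assms(1), of a m] assms(3) m by simp
  ultimately show ?thesis using dc_last[OF m] dc_0[of x] dc_le_des[of p "f m"] assms(2) by simp
qed

lemma asc_of_dc: "dc (p::nat list) i = dc p j \<Longrightarrow> i \<le> d \<Longrightarrow> d < j \<Longrightarrow> j < length p \<Longrightarrow> distinct p \<Longrightarrow> p!d < p!Suc d"
proof (rule ccontr)
  assume a: "dc p i = dc p j" "i \<le> d" "d < j" "j < length p" "distinct p" "\<not> p!d < p!Suc d"
  hence "p!d \<noteq> p!Suc d" by (simp add: nth_eq_iff_index_eq)
  hence "p!Suc d < p!d" using a(6) by simp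
  moreover have "Suc d < length p" using a by simp
  ultimately have "dc p i < dc p j" using dc_strict[OF a(2,3), of p] by simp
  thus False using a(1) by simp
qed

lemma asc_mono: "(\<forall>d. i \<le> d \<and> d < j \<longrightarrow> (p::nat list)!d < p!Suc d) \<Longrightarrow> i \<le> a \<Longrightarrow> a < b \<Longrightarrow> b \<le> j \<Longrightarrow> p!a < p!b"
proof (induction b)
  case 0 thus ?case by simp
next
  case (Suc b)
  show ?case
  proof (cases "a = b")
    case True thus ?thesis using Suc.prems by auto
  next
    case False
    hence "p!a < p!b" using Suc by simp
    moreover have "p!b < p!Suc b" using Suc.prems False by auto
    ultimately show ?thesis by simp
  qed
qed

lemma asc_mono_le: "(\<forall>d. i \<le> d \<and> d < j \<longrightarrow> (p::nat list)!d < p!Suc d) \<Longrightarrow> i \<le> a \<Longrightarrow> a \<le> b \<Longrightarrow> b \<le> j \<Longrightarrow> p!a \<le> p!b"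
  using asc_mono[of i j p a b] by (cases "a = b") auto

definition blockvia :: "nat list \<Rightarrow> nat set \<Rightarrow> nat \<Rightarrow> nat \<Rightarrow> bool" where
  "blockvia p Oc j i \<longleftrightarrow> j < length p \<and> j \<notin> Oc \<and> i \<in> Oc \<and> i < j \<and>
     (\<forall>d. i \<le> d \<and> d < j \<longrightarrow> p!d < p!Suc d) \<and> \<not>(\<exists>r\<in>Oc. p!i < p!r \<and> p!r < p!j)"

definition Bl :: "nat list \<Rightarrow> nat set \<Rightarrow> nat set" where
  "Bl p Oc = {j. \<exists>i. blockvia p Oc j i}"

lemma same_run:
  assumes "emb x p f" "emb x p g" "distinct p" "descents x = descents p" "a < length x"
  shows "\<forall>d. min (f a) (g a) \<le> d \<and> d < max (f a) (g a) \<longrightarrow> p!d < p!Suc d"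
proof (intro allI impI)
  fix d assume d: "min (f a) (g a) \<le> d \<and> d < max (f a) (g a)"
  have e: "dc p (f a) = dc p (g a)" using runA[OF assms(1,4,5)] runA[OF assms(2,4,5)] by simp
  have l: "f a < length p" "g a < length p" using assms(1,2,5) unfolding emb_def by auto
  show "p!d < p!Suc d"
  proof (cases "f a \<le> g a")
    case True thus ?thesis using asc_of_dc[OF e, of d] d l assms(3) by (simp add: max_def min_def)
  next
    case False thus ?thesis using asc_of_dc[OF e[symmetric], of d] d l assms(3) by (simp add: max_def min_def)
  qed
qed

lemma max_val:
  assumes "emb x p f" "emb x p g" "distinct p" "descents x = descents p" "a < length x"
  shows "p!(max (f a) (g a)) = max (p!(f a)) (p!(g a))"
proof -
  note sr = same_run[OF assms]
  show ?thesis
  proof (cases "f a \<le> g a")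
    case True
    have "p!(f a) \<le> p!(g a)" using asc_mono_le[OF sr, of "f a" "g a"] True by (simp add: min_def max_def)
    thus ?thesis using True by (simp add: max_def)
  next
    case False
    have "p!(g a) \<le> p!(f a)" using asc_mono_le[OF sr, of "g a" "f a"] False by (simp add: min_def max_def)
    thus ?thesis using False by (simp add: max_def)
  qed
qed

lemma max_emb:
  assumes "emb x p f" "emb x p g" "distinct p" "descents x = descents p"
  shows "emb x p (\<lambda>a. max (f a) (g a))"
  unfolding emb_def
proof (intro conjI allI impI)
  fix i assume "i < length x" thus "max (f i) (g i) < length p" using assms unfolding emb_def by auto
next
  fix i j assume "i < j" "j < length x" thus "max (f i) (g i) < max (f j) (g j)"
    using assms unfolding emb_def by (simp add: max_def) (metis le_less_trans less_imp_le_nat not_le)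
next
  fix i j assume i: "i < length x" and j: "j < length x"
  have fi: "(x!i < x!j) = (p!(f i) < p!(f j))" and gi: "(x!i < x!j) = (p!(g i) < p!(g j))"
    using assms i j unfolding emb_def by auto
  show "(x!i < x!j) = (p!(max (f i) (g i)) < p!(max (f j) (g j)))"
    unfolding max_val[OF assms i] max_val[OF assms j] using fi gi by (auto simp: max_def)
qed

lemma replace_emb:
  assumes e: "emb x p f" and d: "distinct p" and r: "r < length x"
    and b: "blockvia p (f ` {..<length x}) j (f r)"
  shows "emb x p (f(r := j))"
proof -
  let ?m = "length x"
  have jn: "j < length p" and jO: "j \<notin> f ` {..<?m}" and rj: "f r < j"
    and asc: "\<forall>d. f r \<le> d \<and> d < j \<longrightarrow> p!d < p!Suc d"
    and nb: "\<And>s. s < ?m \<Longrightarrow> \<not>(p!(f r) < p!(f s) \<and> p!(f s) < p!j)"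
    using b unfolding blockvia_def by auto
  have fl: "\<And>a. a < ?m \<Longrightarrow> f a < length p" and fm: "\<And>a b. a < b \<Longrightarrow> b < ?m \<Longrightarrow> f a < f b"
    and fo: "\<And>a b. a < ?m \<Longrightarrow> b < ?m \<Longrightarrow> (x!a < x!b) = (p!(f a) < p!(f b))"
    using e unfolding emb_def by auto
  have prj: "p!(f r) < p!j" using asc_mono[OF asc, of "f r" j] rj by simp
  have k1: "(p!(f s) < p!j) = (p!(f s) < p!(f r))" and k2: "(p!j < p!(f s)) = (p!(f r) < p!(f s))"
    if s: "s < ?m" "s \<noteq> r" for s
  proof -
    have "f s \<noteq> f r" using s r fm by (metis linorder_neqE_nat less_irrefl)
    hence n1: "p!(f s) \<noteq> p!(f r)" using d fl s r by (simp add: nth_eq_iff_index_eq)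
    have "f s \<noteq> j" using jO s by auto
    hence n2: "p!(f s) \<noteq> p!j" using d fl s jn by (simp add: nth_eq_iff_index_eq)
    show "(p!(f s) < p!j) = (p!(f s) < p!(f r))" using n1 n2 nb[OF s(1)] prj by auto
    show "(p!j < p!(f s)) = (p!(f r) < p!(f s))" using n1 n2 nb[OF s(1)] prj by auto
  qed
  show ?thesis unfolding emb_def
  proof (intro conjI allI impI)
    fix a assume "a < ?m" thus "(f(r := j)) a < length p" using fl jn by simp
  next
    fix a b assume ab: "a < b" "b < ?m"
    show "(f(r := j)) a < (f(r := j)) b"
    proof (cases "b = r")
      case True
      hence "f a < f r" using ab fm by simp
      thus ?thesis using True rj ab by simp
    next
      case False
      note bF = False
      show ?thesis
      proof (cases "a = r")
        case True
        have "j < f b"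
        proof (rule ccontr)
          assume "\<not> j < f b"
          moreover have "f b \<noteq> j" using jO ab by auto
          ultimately have "f b < j" by simp
          moreover have "f r < f b" using fm ab True by simp
          ultimately have "p!(f r) < p!(f b)" "p!(f b) < p!j"
            using asc_mono[OF asc, of "f r" "f b"] asc_mono[OF asc, of "f b" j] by auto
          thus False using nb[OF ab(2)] by simp
        qed
        thus ?thesis using True bF by simp
      next
        case False thus ?thesis using bF fm ab by simp
      qed
    qed
  next
    fix a b assume a: "a < ?m" and b: "b < ?m"
    show "(x!a < x!b) = (p!((f(r := j)) a) < p!((f(r := j)) b))"
    proof (cases "a = r"; cases "b = r")
      assume "a = r" "b = r" thus ?thesis by simp
    next
      assume "a = r" "b \<noteq> r" thus ?thesis using fo[OF a b] k2[OF b] by simp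
    next
      assume "a \<noteq> r" "b = r" thus ?thesis using fo[OF a b] k1[OF a] by simp
    next
      assume "a \<noteq> r" "b \<noteq> r" thus ?thesis using fo[OF a b] by simp
    qed
  qed
qed

lemma block_lemma:
  assumes f: "emb x p f" and h: "emb x p h" and d: "distinct p" and de: "descents x = descents p"
    and le: "\<forall>a<length x. f a \<le> h a" and a0: "a0 < length x" "f a0 < h a0"
  shows "\<exists>r<length x. f r < h r \<and> blockvia p (f ` {..<length x}) (h r) (f r)"
proof -
  let ?m = "length x"
  define D where "D = {a. a < ?m \<and> f a < h a}"
  have Df: "finite D" and Dne: "D \<noteq> {}" using a0 unfolding D_def by auto
  define M where "M = Max ((\<lambda>a. p!(f a)) ` D)"
  have "M \<in> (\<lambda>a. p!(f a)) ` D" unfolding M_def using Df Dne by simp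
  then obtain r where rD: "r \<in> D" and rM: "p!(f r) = M" by auto
  have mx: "\<And>s. s \<in> D \<Longrightarrow> p!(f s) \<le> p!(f r)" unfolding rM M_def using Df by simp
  have r: "r < ?m" "f r < h r" using rD unfolding D_def by auto
  have fl: "\<And>a. a < ?m \<Longrightarrow> f a < length p" and fm: "\<And>a b. a < b \<Longrightarrow> b < ?m \<Longrightarrow> f a < f b"
    and fo: "\<And>a b. a < ?m \<Longrightarrow> b < ?m \<Longrightarrow> (x!a < x!b) = (p!(f a) < p!(f b))"
    using f unfolding emb_def by auto
  have hl: "\<And>a. a < ?m \<Longrightarrow> h a < length p" and hm: "\<And>a b. a < b \<Longrightarrow> b < ?m \<Longrightarrow> h a < h b"
    and ho: "\<And>a b. a < ?m \<Longrightarrow> b < ?m \<Longrightarrow> (x!a < x!b) = (p!(h a) < p!(h b))"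
    using h unfolding emb_def by auto
  have asc: "\<forall>d. f r \<le> d \<and> d < h r \<longrightarrow> p!d < p!Suc d"
    using same_run[OF f h d de r(1)] r(2) by (simp add: min_def max_def)
  have prh: "p!(f r) < p!(h r)" using asc_mono[OF asc, of "f r" "h r"] r by simp
  have notin: "h r \<notin> f ` {..<?m}"
  proof
    assume "h r \<in> f ` {..<?m}"
    then obtain s where s: "s < ?m" "h r = f s" by auto
    have "\<not> s \<le> r"
    proof
      assume "s \<le> r"
      hence "f s \<le> f r" using fm r(1) by (cases "s = r") (auto simp: less_imp_le)
      thus False using s r by simp
    qed
    hence "r < s" by simp
    hence "h r < h s" using hm[OF _ s(1)] by blast
    hence "f s < h s" using s(2) by simp
    hence "s \<in> D" using s unfolding D_def by simp
    hence "p!(f s) \<le> p!(f r)" by (rule mx)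
    thus False using prh s by simp
  qed
  have nb: "\<not>(\<exists>q\<in>f ` {..<?m}. p!(f r) < p!q \<and> p!q < p!(h r))"
  proof
    assume "\<exists>q\<in>f ` {..<?m}. p!(f r) < p!q \<and> p!q < p!(h r)"
    then obtain s where s: "s < ?m" "p!(f r) < p!(f s)" "p!(f s) < p!(h r)" by auto
    have "x!r < x!s" using fo[OF r(1) s(1)] s by simp
    hence "p!(h r) < p!(h s)" using ho[OF r(1) s(1)] by simp
    hence "f s \<noteq> h s" using s by auto
    hence "s \<in> D" using le s unfolding D_def by (simp add: le_neq_implies_less)
    hence "p!(f s) \<le> p!(f r)" by (rule mx)
    thus False using s by simp
  qed
  have "blockvia p (f ` {..<?m}) (h r) (f r)"
    unfolding blockvia_def using hl[OF r(1)] notin r asc nb by auto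
  thus ?thesis using r by blast
qed

definition tails :: "nat list \<Rightarrow> nat set" where
  "tails p = {i. 1 \<le> i \<and> i < length p \<and> p ! i = p ! (i - 1) + 1}"

lemma tail_block: assumes "j \<in> tails p" "j - 1 \<in> Oc" "j \<notin> Oc" shows "j \<in> Bl p Oc"
proof -
  have j: "1 \<le> j" "j < length p" "p!j = p!(j-1) + 1" using assms(1) unfolding tails_def by auto
  have sj: "Suc (j - 1) = j" using j by simp
  have "blockvia p Oc j (j - 1)" unfolding blockvia_def
  proof (intro conjI allI impI)
    fix d assume "j - 1 \<le> d \<and> d < j"
    hence "d = j - 1" by arith
    thus "p!d < p!Suc d" using j sj by simp
  qed (use j assms in auto)
  thus ?thesis unfolding Bl_def by blast
qed

lemma free_lemma:
  assumes p: "is_perm p" and Os: "Oc \<subseteq> {..<length p}" and On: "Oc \<noteq> {..<length p}"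
    and TB: "tails p \<inter> Bl p Oc = {}"
  shows "\<exists>e<length p. e \<notin> tails p \<and> e \<notin> Oc \<and> e \<notin> Bl p Oc"
proof (rule ccontr)
  let ?n = "length p"
  assume "\<not> ?thesis"
  hence H: "\<And>e. e < ?n \<Longrightarrow> e \<notin> Oc \<Longrightarrow> e \<in> tails p \<or> e \<in> Bl p Oc" by blast
  have dist: "distinct p" and setp: "set p = {1..?n}" using p unfolding is_perm_def by auto
  have "\<exists>e. e < ?n \<and> e \<notin> Oc" using Os On by auto
  define j0 where "j0 = (LEAST e. e < ?n \<and> e \<notin> Oc)"
  have j0: "j0 < ?n" "j0 \<notin> Oc" using LeastI_ex[OF \<open>\<exists>e. e < ?n \<and> e \<notin> Oc\<close>] unfolding j0_def by auto
  have "j0 \<in> Bl p Oc"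
  proof (cases "j0 \<in> tails p")
    case True
    hence "1 \<le> j0" unfolding tails_def by simp
    hence "j0 - 1 < j0" by simp
    hence "\<not> (j0 - 1 < ?n \<and> j0 - 1 \<notin> Oc)" unfolding j0_def by (rule not_less_Least)
    hence "j0 - 1 \<in> Oc" using j0 by auto
    thus ?thesis using tail_block[OF True _ j0(2)] by simp
  next
    case False thus ?thesis using H[OF j0] by simp
  qed
  then obtain jj ii where "blockvia p Oc jj ii" unfolding Bl_def by blast
  hence "(case (jj, ii) of (j, i) \<Rightarrow> blockvia p Oc j i)" by simp
  from ex_has_least_nat[of "\<lambda>(j, i). blockvia p Oc j i", OF this, of "\<lambda>(j, i). p!j - p!i"]
  obtain j i where ji: "blockvia p Oc j i" and mn: "\<And>j' i'. blockvia p Oc j' i' \<Longrightarrow> p!j - p!i \<le> p!j' - p!i'"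
    by auto
  have jn: "j < ?n" and jO: "j \<notin> Oc" and iO: "i \<in> Oc" and ij: "i < j"
    and asc: "\<forall>d. i \<le> d \<and> d < j \<longrightarrow> p!d < p!Suc d" and nb: "\<not>(\<exists>r\<in>Oc. p!i < p!r \<and> p!r < p!j)"
    using ji unfolding blockvia_def by auto
  have inn: "i < ?n" using ij jn by simp
  have pij: "p!i < p!j" using asc_mono[OF asc, of i j] ij by simp
  have jB: "j \<in> Bl p Oc" using ji unfolding Bl_def by blast
  show False
  proof (cases "p!j = p!i + 1")
    case True
    have "\<not> Suc i < j"
    proof
      assume "Suc i < j"
      hence "p!i < p!Suc i" "p!Suc i < p!j" using asc_mono[OF asc, of i "Suc i"] asc_mono[OF asc, of "Suc i" j] by auto
      thus False using True by simp
    qed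
    hence "j = Suc i" using ij by simp
    hence "j \<in> tails p" unfolding tails_def using jn True by simp
    thus False using jB TB by blast
  next
    case False
    define v where "v = p!i + 1"
    have "p!j \<in> {1..?n}" using setp jn nth_mem[OF jn] by blast
    hence "v \<in> set p" using setp pij False unfolding v_def by auto
    then obtain q where q: "q < ?n" "p!q = v" by (auto simp: in_set_conv_nth)
    have qO: "q \<notin> Oc" using nb q pij False unfolding v_def by force
    show False
    proof (cases "q \<in> tails p")
      case True
      hence q1: "1 \<le> q" "p!q = p!(q-1) + 1" unfolding tails_def by auto
      hence "p!(q-1) = p!i" using q unfolding v_def by simp
      hence "q - 1 = i" using dist inn q by (simp add: nth_eq_iff_index_eq)
      hence "q \<in> Bl p Oc" using tail_block[OF True _ qO] iO by simp
      thus False using True TB by blast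
    next
      case qT: False
      hence "q \<in> Bl p Oc" using H[OF q(1) qO] by simp
      then obtain i' where bi: "blockvia p Oc q i'" unfolding Bl_def by blast
      have "\<forall>d. i' \<le> d \<and> d < q \<longrightarrow> p!d < p!Suc d" "i' < q" using bi unfolding blockvia_def by auto
      hence piq: "p!i' < p!q" using asc_mono[of i' q p i' q] by simp
      have "\<not>(p!i' < p!i \<and> p!i < p!q)" using bi iO unfolding blockvia_def by blast
      hence "p!i \<le> p!i'" using q unfolding v_def by auto
      hence "p!q - p!i' < p!j - p!i" using q piq False pij unfolding v_def by linarith
      thus False using mn[OF bi] by simp
    qed
  qed
qed

lemma alt_sum:
  assumes U: "finite U" and e: "e \<in> U" "e \<notin> A"
  shows "(\<Sum>S\<in>{S. A \<subseteq> S \<and> S \<subseteq> U}. (-1::int)^card S) = 0"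
proof -
  define X where "X = {S. A \<subseteq> S \<and> S \<subseteq> U - {e}}"
  have fX: "finite X" unfolding X_def by (rule finite_subset[of _ "Pow U"]) (use U in auto)
  have eq: "{S. A \<subseteq> S \<and> S \<subseteq> U} = X \<union> insert e ` X"
  proof
    show "{S. A \<subseteq> S \<and> S \<subseteq> U} \<subseteq> X \<union> insert e ` X"
    proof
      fix S assume S: "S \<in> {S. A \<subseteq> S \<and> S \<subseteq> U}"
      show "S \<in> X \<union> insert e ` X"
      proof (cases "e \<in> S")
        case True
        hence "S = insert e (S - {e})" by auto
        moreover have "S - {e} \<in> X" using S e unfolding X_def by auto
        ultimately show ?thesis by blast
      next
        case False thus ?thesis using S unfolding X_def by auto
      qed
    qed
    show "X \<union> insert e ` X \<subseteq> {S. A \<subseteq> S \<and> S \<subseteq> U}" using e unfolding X_def by auto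
  qed
  have dj: "X \<inter> insert e ` X = {}" unfolding X_def by auto
  have inj: "inj_on (insert e) X" unfolding X_def inj_on_def by auto
  have "(\<Sum>S\<in>insert e ` X. (-1::int)^card S) = (\<Sum>S\<in>X. (-1::int)^card (insert e S))"
    by (rule sum.reindex[OF inj, unfolded comp_def])
  also have "\<dots> = (\<Sum>S\<in>X. - ((-1::int)^card S))"
  proof (rule sum.cong)
    fix S assume "S \<in> X"
    hence "finite S" "e \<notin> S" unfolding X_def using U by (auto intro: finite_subset)
    thus "(-1::int)^card (insert e S) = - ((-1::int)^card S)" by simp
  qed simp
  finally have "(\<Sum>S\<in>insert e ` X. (-1::int)^card S) = - (\<Sum>S\<in>X. (-1::int)^card S)"
    by (simp add: sum_negf)
  moreover have "(\<Sum>S\<in>X \<union> insert e ` X. (-1::int)^card S) = (\<Sum>S\<in>X. (-1::int)^card S) + (\<Sum>S\<in>insert e ` X. (-1::int)^card S)"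
    by (rule sum.union_disjoint[OF fX finite_imageI[OF fX] dj])
  ultimately show ?thesis unfolding eq by simp
qed

lemma sum_update_less:
  fixes f :: "nat \<Rightarrow> nat"
  assumes "r < m" "f r < j" shows "sum f {..<m} < sum (f(r := j)) {..<m}"
proof (rule sum_strict_mono_ex1)
  show "\<forall>x\<in>{..<m}. f x \<le> (f(r := j)) x" using assms by auto
  show "\<exists>a\<in>{..<m}. f a < (f(r := j)) a" using assms by (intro bexI[of _ r]) auto
qed simp

lemma K:
  assumes p: "is_perm p" and x: "is_perm x" and de: "descents x = descents p"
    and c: "contains x p" and ne: "x \<noteq> p"
  shows "(\<Sum>S\<in>{S. tails p \<subseteq> S \<and> S \<subseteq> {..<length p} \<and> (\<exists>f. emb x p f \<and> f ` {..<length x} \<subseteq> S)}.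
            (-1::int)^card S) = 0"
proof -
  let ?n = "length p" and ?m = "length x"
  have dist: "distinct p" using p unfolding is_perm_def by simp
  obtain f0 where f0: "emb x p f0" using c contains_emb by blast
  have mn: "?m < ?n"
  proof -
    have "?m \<le> ?n" by (rule emb_len[OF f0])
    moreover have "?m \<noteq> ?n"
    proof
      assume l: "?m = ?n"
      have "order_iso x p" using f0 emb_is_id[OF f0 l] l unfolding emb_def order_iso_def by auto
      thus False using perm_iso_eq[OF x p] ne by simp
    qed
    ultimately show ?thesis by simp
  qed
  define Occ where "Occ = {f ` {..<?m} | f. emb x p f}"
  define G where "G Oc = {S. tails p \<subseteq> S \<and> S \<subseteq> {..<?n} \<and> Oc \<subseteq> S \<and> S \<inter> Bl p Oc = {}}" for Oc
  define F where "F = {S. tails p \<subseteq> S \<and> S \<subseteq> {..<?n} \<and> (\<exists>f. emb x p f \<and> f ` {..<?m} \<subseteq> S)}"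
  have imgsub: "f ` {..<?m} \<subseteq> {..<?n}" if "emb x p f" for f using that unfolding emb_def by auto
  have fOcc: "finite Occ"
  proof (rule finite_subset[of _ "Pow {..<?n}"])
    show "Occ \<subseteq> Pow {..<?n}" unfolding Occ_def using imgsub by blast
  qed simp
  have fG: "finite (G Oc)" for Oc unfolding G_def by (rule finite_subset[of _ "Pow {..<?n}"]) auto
  have cover: "F = \<Union> (G ` Occ)"
  proof
    show "F \<subseteq> \<Union> (G ` Occ)"
    proof
      fix S assume S: "S \<in> F"
      hence "\<exists>f. emb x p f \<and> f ` {..<?m} \<subseteq> S" unfolding F_def by blast
      then obtain f1 where f1: "emb x p f1" "f1 ` {..<?m} \<subseteq> S" by blast
      define P where "P k = (\<exists>f. emb x p f \<and> f ` {..<?m} \<subseteq> S \<and> sum f {..<?m} = k)" for k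
      have Pk: "P (sum f1 {..<?m})" unfolding P_def using f1 by blast
      have bnd: "\<forall>k. P k \<longrightarrow> k \<le> ?m * ?n"
      proof (intro allI impI)
        fix k assume "P k"
        then obtain f where f: "emb x p f" "sum f {..<?m} = k" unfolding P_def by blast
        have "sum f {..<?m} \<le> sum (\<lambda>_. ?n) {..<?m}"
          by (rule sum_mono) (use f in \<open>auto simp: emb_def less_imp_le\<close>)
        thus "k \<le> ?m * ?n" using f by simp
      qed
      obtain kk where kk: "P kk" "\<forall>k. P k \<longrightarrow> k \<le> kk"
        using Nat.ex_has_greatest_nat[OF Pk bnd] by blast
      have kk2: "sum g {..<?m} \<le> kk" if "emb x p g" "g ` {..<?m} \<subseteq> S" for g
        using kk(2) that unfolding P_def by blast
      then obtain f where f: "emb x p f" "f ` {..<?m} \<subseteq> S" "sum f {..<?m} = kk" using kk(1) unfolding P_def by blast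
      have "S \<inter> Bl p (f ` {..<?m}) = {}"
      proof (rule ccontr)
        assume "S \<inter> Bl p (f ` {..<?m}) \<noteq> {}"
        then obtain j i where j: "j \<in> S" "blockvia p (f ` {..<?m}) j i" unfolding Bl_def by blast
        then obtain r where r: "r < ?m" "i = f r" unfolding blockvia_def by auto
        have b: "blockvia p (f ` {..<?m}) j (f r)" using j r by simp
        have e2: "emb x p (f(r := j))" by (rule replace_emb[OF f(1) dist r(1) b])
        have "(f(r := j)) ` {..<?m} \<subseteq> S" using f(2) j(1) by auto
        hence "sum (f(r := j)) {..<?m} \<le> kk" using kk2 e2 by blast
        moreover have "f r < j" using b unfolding blockvia_def by simp
        ultimately show False using sum_update_less[OF r(1), of f j] f(3) by simp
      qed
      hence "S \<in> G (f ` {..<?m})" using S f unfolding F_def G_def by auto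
      moreover have "f ` {..<?m} \<in> Occ" using f unfolding Occ_def by blast
      ultimately show "S \<in> \<Union> (G ` Occ)" by blast
    qed
    show "\<Union> (G ` Occ) \<subseteq> F"
    proof
      fix S assume "S \<in> \<Union> (G ` Occ)"
      then obtain Oc where Oc: "Oc \<in> Occ" "S \<in> G Oc" by blast
      then obtain f where f: "emb x p f" "Oc = f ` {..<?m}" unfolding Occ_def by blast
      show "S \<in> F" using Oc(2) f unfolding G_def F_def by blast
    qed
  qed
  have disj: "\<forall>O1\<in>Occ. \<forall>O2\<in>Occ. O1 \<noteq> O2 \<longrightarrow> G O1 \<inter> G O2 = {}"
  proof (intro ballI impI)
    fix O1 O2 assume O1: "O1 \<in> Occ" and O2: "O2 \<in> Occ" and ne12: "O1 \<noteq> O2"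
    obtain f where f: "emb x p f" "O1 = f ` {..<?m}" using O1 unfolding Occ_def by blast
    obtain g where g: "emb x p g" "O2 = g ` {..<?m}" using O2 unfolding Occ_def by blast
    show "G O1 \<inter> G O2 = {}"
    proof (rule ccontr)
      assume "G O1 \<inter> G O2 \<noteq> {}"
      then obtain S where S: "S \<in> G O1" "S \<in> G O2" by blast
      have S1: "O1 \<subseteq> S" "S \<inter> Bl p O1 = {}" and S2: "O2 \<subseteq> S" "S \<inter> Bl p O2 = {}"
        using S unfolding G_def by auto
      show False
      proof (cases "\<exists>a<?m. f a < g a")
        case True
        then obtain a where a: "a < ?m" "f a < g a" by blast
        let ?h = "\<lambda>a. max (f a) (g a)"
        have h: "emb x p ?h" by (rule max_emb[OF f(1) g(1) dist de])
        obtain r where r: "r < ?m" "f r < ?h r" "blockvia p (f ` {..<?m}) (?h r) (f r)"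
          using block_lemma[OF f(1) h dist de _ a(1)] a by auto
        have "?h r = g r" using r(2) by (simp add: max_def split: if_splits)
        hence "g r \<in> S" "g r \<in> Bl p O1" using r S2(1) g(2) f(2) unfolding Bl_def by auto
        thus False using S1(2) by blast
      next
        case False
        hence le: "\<forall>a<?m. g a \<le> f a" by auto
        show False
        proof (cases "\<exists>a<?m. g a < f a")
          case True
          then obtain a where a: "a < ?m" "g a < f a" by blast
          obtain r where r: "r < ?m" "blockvia p (g ` {..<?m}) (f r) (g r)"
            using block_lemma[OF g(1) f(1) dist de le a(1)] a by auto
          hence "f r \<in> S" "f r \<in> Bl p O2" using S1(1) g(2) f(2) unfolding Bl_def by auto
          thus False using S2(2) by blast
        next
          case False
          hence "\<forall>a<?m. f a = g a" using le by (meson not_less order.antisym)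
          hence "O1 = O2" using f(2) g(2) by auto
          thus False using ne12 by simp
        qed
      qed
    qed
  qed
  have zero: "(\<Sum>S\<in>G Oc. (-1::int)^card S) = 0" if Oc: "Oc \<in> Occ" for Oc
  proof (cases "tails p \<inter> Bl p Oc = {}")
    case False
    hence "G Oc = {}" unfolding G_def by blast
    thus ?thesis by simp
  next
    case True
    obtain f where f: "emb x p f" "Oc = f ` {..<?m}" using Oc unfolding Occ_def by blast
    have Os: "Oc \<subseteq> {..<?n}" using imgsub[OF f(1)] f(2) by simp
    have "inj_on f {..<?m}" using f(1) unfolding emb_def inj_on_def by (metis lessThan_iff linorder_neqE_nat less_irrefl)
    hence "card Oc = ?m" using f(2) by (simp add: card_image)
    hence On: "Oc \<noteq> {..<?n}" using mn by auto
    obtain e where e: "e < ?n" "e \<notin> tails p" "e \<notin> Oc" "e \<notin> Bl p Oc"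
      using free_lemma[OF p Os On True] by blast
    have "G Oc = {S. tails p \<union> Oc \<subseteq> S \<and> S \<subseteq> {..<?n} - Bl p Oc}" unfolding G_def by blast
    thus ?thesis using alt_sum[of "{..<?n} - Bl p Oc" e "tails p \<union> Oc"] e by simp
  qed
  have "(\<Sum>S\<in>F. (-1::int)^card S) = (\<Sum>Oc\<in>Occ. \<Sum>S\<in>G Oc. (-1::int)^card S)"
    unfolding cover by (rule sum.UNION_disjoint[OF fOcc]) (use fG disj in auto)
  also have "\<dots> = 0" using zero by simp
  finally show ?thesis unfolding F_def .
qed

lemma perms_finite: "finite {x. is_perm x \<and> length x \<le> N}"
proof (rule finite_subset[of _ "{xs. set xs \<subseteq> {..N} \<and> length xs \<le> N}"])
  show "{x. is_perm x \<and> length x \<le> N} \<subseteq> {xs. set xs \<subseteq> {..N} \<and> length xs \<le> N}"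
    unfolding is_perm_def by auto
  show "finite {xs. set xs \<subseteq> {..N} \<and> length xs \<le> N}" by (rule finite_lists_length_le) simp
qed

lemma contains_len: "contains a b \<Longrightarrow> length a \<le> length b"
  using emb_len contains_emb by blast

lemma interval_finite: "finite {x. is_perm x \<and> contains s x \<and> contains x y}"
  by (rule finite_subset[OF _ perms_finite[of "length y"]]) (auto dest: contains_len)

lemma mob_sum:
  assumes s: "is_perm s" and y: "is_perm y" and ne: "s \<noteq> y"
  shows "(\<Sum>x\<in>{x. is_perm x \<and> contains s x \<and> contains x y}. mobius s x) = 0"
proof (cases "contains s y")
  case False
  hence e: "{x. is_perm x \<and> contains s x \<and> contains x y} = {}" using contains_trans by blast
  show ?thesis unfolding e by simp
next
  case True
  define Z where "Z = {z. is_perm z \<and> contains s z \<and> contains z y \<and> \<not> contains y z}"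
  have m: "mobius s y = - (\<Sum>z\<in>Z. mobius s z)"
    unfolding Z_def using ne True by (subst mobius.simps) simp
  have eq: "{x. is_perm x \<and> contains s x \<and> contains x y} = insert y Z"
    unfolding Z_def using y True contains_refl contains_antisym by blast
  have fZ: "finite Z" unfolding Z_def by (rule finite_subset[OF _ interval_finite[of s y]]) auto
  have yZ: "y \<notin> Z" unfolding Z_def using contains_refl by blast
  show ?thesis unfolding eq using sum.insert[OF fZ yZ, of "mobius s"] m by simp
qed

lemma emb_iso: "order_iso y L \<Longrightarrow> emb x y g = emb x L g"
  unfolding emb_def order_iso_def by auto

lemma emb_filter:
  fixes p :: "nat list"
  assumes Sn: "S \<subseteq> {..<length p}"
  defines "il \<equiv> filter (\<lambda>i. i \<in> S) [0..<length p]"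
  shows "(\<exists>g. emb x (map ((!) p) il) g) \<longleftrightarrow> (\<exists>f. emb x p f \<and> f ` {..<length x} \<subseteq> S)"
proof
  have sw: "sorted_wrt (<) il" unfolding il_def by (rule sorted_wrt_filter) simp
  assume "\<exists>g. emb x (map ((!) p) il) g"
  then obtain g where g: "emb x (map ((!) p) il) g" by blast
  have "emb x p ((!) il \<circ> g)" unfolding emb_def
  proof (intro conjI allI impI)
    fix i assume "i < length x"
    hence "g i < length il" using g unfolding emb_def by auto
    hence "il ! (g i) \<in> set il" by simp
    thus "((!) il \<circ> g) i < length p" unfolding il_def by auto
  next
    fix i j assume "i < j" "j < length x"
    moreover hence "g i < g j" "g j < length il" using g unfolding emb_def by auto
    ultimately show "((!) il \<circ> g) i < ((!) il \<circ> g) j" using sw by (simp add: sorted_wrt_iff_nth_less)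
  next
    fix i j assume "i < length x" "j < length x"
    thus "(x!i < x!j) = (p ! (((!) il \<circ> g) i) < p ! (((!) il \<circ> g) j))"
      using g unfolding emb_def by auto
  qed
  moreover have "((!) il \<circ> g) ` {..<length x} \<subseteq> S"
  proof
    fix v assume "v \<in> ((!) il \<circ> g) ` {..<length x}"
    then obtain i where i: "i < length x" "v = il ! (g i)" by auto
    hence "g i < length il" using g unfolding emb_def by auto
    hence "il ! (g i) \<in> set il" by simp
    thus "v \<in> S" using i unfolding il_def by auto
  qed
  ultimately show "\<exists>f. emb x p f \<and> f ` {..<length x} \<subseteq> S" by blast
next
  have sw: "sorted_wrt (<) il" unfolding il_def by (rule sorted_wrt_filter) simp
  have so: "sorted il" unfolding il_def by (rule sorted_wrt_filter) simp
  assume "\<exists>f. emb x p f \<and> f ` {..<length x} \<subseteq> S"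
  then obtain f where f: "emb x p f" "f ` {..<length x} \<subseteq> S" by blast
  define g where "g a = (SOME k. k < length il \<and> il ! k = f a)" for a
  have gp: "g a < length il \<and> il ! (g a) = f a" if a: "a < length x" for a
  proof -
    have "f a \<in> S" "f a < length p" using f a unfolding emb_def by auto
    hence "f a \<in> set il" unfolding il_def by simp
    then obtain k where "k < length il" "il ! k = f a" by (auto simp: in_set_conv_nth)
    hence "\<exists>k. k < length il \<and> il ! k = f a" by blast
    thus ?thesis unfolding g_def by (rule someI_ex)
  qed
  have "emb x (map ((!) p) il) g" unfolding emb_def
  proof (intro conjI allI impI)
    fix i assume "i < length x" thus "g i < length (map ((!) p) il)" using gp by simp
  next
    fix i j assume ij: "i < j" "j < length x"
    have "f i < f j" using f ij unfolding emb_def by auto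
    hence lt: "il ! (g i) < il ! (g j)" using gp ij by simp
    show "g i < g j"
    proof (rule ccontr)
      assume "\<not> g i < g j"
      hence "g j \<le> g i" by simp
      moreover have "g i < length il" using gp ij by simp
      ultimately have "il ! (g j) \<le> il ! (g i)" using sorted_nth_mono[OF so] by blast
      thus False using lt by simp
    qed
  next
    fix i j assume "i < length x" "j < length x"
    thus "(x!i < x!j) = (map ((!) p) il ! g i < map ((!) p) il ! g j)"
      using gp f unfolding emb_def by auto
  qed
  thus "\<exists>g. emb x (map ((!) p) il) g" by blast
qed

theorem mainTheorem7:
  fixes \<sigma> \<pi> :: "nat list" and k :: nat
  assumes "is_perm \<sigma>" and "is_perm \<pi>"
    and "descents \<sigma> = k" and "descents \<pi> = k"
    and "adj_tail_count \<pi> > length \<sigma>"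
  shows "mobius \<sigma> \<pi> = 0"
proof (cases "contains \<sigma> \<pi>")
  case False
  have "\<sigma> \<noteq> \<pi>" using False contains_refl by blast
  thus ?thesis using False by (subst mobius.simps) simp
next
  case True
  note sp = assms(1) and pp = assms(2)
  let ?n = "length \<pi>"
  define T where "T = tails \<pi>"
  have cT: "card T = adj_tail_count \<pi>" unfolding T_def tails_def adj_tail_count_def by simp
  have dist: "distinct \<pi>" using pp unfolding is_perm_def by simp
  define P where "P = {x. is_perm x \<and> contains \<sigma> x \<and> contains x \<pi>}"
  define SS where "SS = {S. T \<subseteq> S \<and> S \<subseteq> {..<?n}}"
  define occ where "occ x S = (\<exists>f. emb x \<pi> f \<and> f ` {..<length x} \<subseteq> S)" for x S
  define g where "g x S = (if occ x S then mobius \<sigma> x * (-1::int)^card S else 0)" for x S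
  have fP: "finite P" unfolding P_def by (rule interval_finite)
  have fSS: "finite SS" unfolding SS_def by (rule finite_subset[of _ "Pow {..<?n}"]) auto
  have piP: "\<pi> \<in> P" unfolding P_def using True pp contains_refl by blast
  have inner1: "(\<Sum>S\<in>SS. g x S) = (if x = \<pi> then mobius \<sigma> \<pi> * (-1)^?n else 0)" if xP: "x \<in> P" for x
  proof -
    have "(\<Sum>S\<in>SS. g x S) = (\<Sum>S\<in>{S\<in>SS. occ x S}. mobius \<sigma> x * (-1::int)^card S)"
      unfolding g_def by (simp add: sum.inter_filter[OF fSS])
    also have "\<dots> = mobius \<sigma> x * (\<Sum>S\<in>{S\<in>SS. occ x S}. (-1::int)^card S)"
      by (simp add: sum_distrib_left)
    finally have e1: "(\<Sum>S\<in>SS. g x S) = mobius \<sigma> x * (\<Sum>S\<in>{S\<in>SS. occ x S}. (-1::int)^card S)" .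
    show ?thesis
    proof (cases "x = \<pi>")
      case True
      have "{S\<in>SS. occ x S} = {{..<?n}}"
      proof
        show "{S\<in>SS. occ x S} \<subseteq> {{..<?n}}"
        proof
          fix S assume S: "S \<in> {S\<in>SS. occ x S}"
          then obtain f where f: "emb \<pi> \<pi> f" "f ` {..<?n} \<subseteq> S" unfolding occ_def True by blast
          have "f ` {..<?n} = {..<?n}" using emb_is_id[OF f(1) refl] by auto
          thus "S \<in> {{..<?n}}" using S f(2) unfolding SS_def by auto
        qed
        have "occ x {..<?n}" unfolding occ_def True using emb_id by (intro exI[of _ id]) auto
        moreover have "{..<?n} \<in> SS" unfolding SS_def T_def tails_def by auto
        ultimately show "{{..<?n}} \<subseteq> {S\<in>SS. occ x S}" by auto
      qed
      thus ?thesis using e1 True by simp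
    next
      case False
      have xp: "is_perm x" "contains \<sigma> x" "contains x \<pi>" using xP unfolding P_def by auto
      have "descents \<sigma> \<le> descents x" "descents x \<le> descents \<pi>"
        using contains_des xp by auto
      hence de: "descents x = descents \<pi>" using assms(3,4) by simp
      have "{S\<in>SS. occ x S} = {S. tails \<pi> \<subseteq> S \<and> S \<subseteq> {..<length \<pi>} \<and> (\<exists>f. emb x \<pi> f \<and> f ` {..<length x} \<subseteq> S)}"
        unfolding SS_def occ_def T_def by blast
      hence "(\<Sum>S\<in>{S\<in>SS. occ x S}. (-1::int)^card S) = 0"
        using K[OF pp xp(1) de xp(3) False] by simp
      thus ?thesis using e1 False by simp
    qed
  qed
  have way1: "(\<Sum>x\<in>P. \<Sum>S\<in>SS. g x S) = mobius \<sigma> \<pi> * (-1)^?n"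
  proof -
    have "(\<Sum>x\<in>P. \<Sum>S\<in>SS. g x S) = (\<Sum>x\<in>P. if x = \<pi> then mobius \<sigma> \<pi> * (-1)^?n else 0)"
      using inner1 by simp
    also have "\<dots> = mobius \<sigma> \<pi> * (-1)^?n" using fP piP by (simp add: sum.delta)
    finally show ?thesis .
  qed
  have inner2: "(\<Sum>x\<in>P. g x S) = 0" if S: "S \<in> SS" for S
  proof -
    have Sn: "S \<subseteq> {..<?n}" and TS: "T \<subseteq> S" using S unfolding SS_def by auto
    define il where "il = filter (\<lambda>i. i \<in> S) [0..<?n]"
    define L where "L = map ((!) \<pi>) il"
    have dil: "distinct il" unfolding il_def by simp
    have sil: "set il \<subseteq> {..<?n}" unfolding il_def by auto
    have dL: "distinct L" unfolding L_def using dil sil dist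
      by (simp add: distinct_map inj_on_def nth_eq_iff_index_eq subset_iff)
    define y where "y = std L"
    have y: "is_perm y" "order_iso y L" "length y = length L" using std_props[OF dL] unfolding y_def by auto
    have "length il = card {i. i < ?n \<and> i \<in> S}" unfolding il_def
      by (simp add: length_filter_conv_card, rule arg_cong[where f=card], auto)
    also have "{i. i < ?n \<and> i \<in> S} = S" using Sn by auto
    finally have lil: "length il = card S" .
    have fS: "finite S" using Sn finite_subset by blast
    have "card T \<le> card S" using TS fS by (simp add: card_mono)
    hence "length \<sigma> < length y" using y(3) lil cT assms(5) unfolding L_def by simp
    hence sy: "\<sigma> \<noteq> y" by auto
    have link: "occ x S \<longleftrightarrow> contains x y" for x
    proof -
      have "contains x y \<longleftrightarrow> (\<exists>g. emb x L g)" using contains_emb emb_iso[OF y(2)] by simp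
      also have "\<dots> \<longleftrightarrow> occ x S" unfolding L_def il_def occ_def by (rule emb_filter[OF Sn])
      finally show ?thesis by simp
    qed
    have set_eq: "{x\<in>P. occ x S} = {x. is_perm x \<and> contains \<sigma> x \<and> contains x y}"
    proof
      show "{x\<in>P. occ x S} \<subseteq> {x. is_perm x \<and> contains \<sigma> x \<and> contains x y}"
        unfolding P_def using link by blast
      show "{x. is_perm x \<and> contains \<sigma> x \<and> contains x y} \<subseteq> {x\<in>P. occ x S}"
      proof
        fix x assume x: "x \<in> {x. is_perm x \<and> contains \<sigma> x \<and> contains x y}"
        hence o: "occ x S" using link by blast
        hence "contains x \<pi>" unfolding occ_def using contains_emb by blast
        thus "x \<in> {x\<in>P. occ x S}" using x o unfolding P_def by blast
      qed
    qed
    have "(\<Sum>x\<in>P. g x S) = (\<Sum>x\<in>{x\<in>P. occ x S}. mobius \<sigma> x * (-1::int)^card S)"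
      unfolding g_def by (simp add: sum.inter_filter[OF fP])
    also have "\<dots> = (\<Sum>x\<in>{x\<in>P. occ x S}. mobius \<sigma> x) * (-1::int)^card S"
      by (simp add: sum_distrib_right)
    also have "\<dots> = 0" unfolding set_eq using mob_sum[OF sp y(1) sy] by simp
    finally show ?thesis .
  qed
  have "(\<Sum>x\<in>P. \<Sum>S\<in>SS. g x S) = (\<Sum>S\<in>SS. \<Sum>x\<in>P. g x S)" by (rule sum.swap)
  also have "\<dots> = 0" using inner2 by simp
  finally have "mobius \<sigma> \<pi> * (-1)^?n = 0" using way1 by simp
  thus ?thesis by simp
qed

end
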